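(* Let $X$ be a nondegenerate random variable with CDF $F$ such that $\mathbb{E}(\min\{X,X'\})$ and $\mathbb{E}(\max\{X,X'\})$ are finite, where $X'$ is an independent copy of $X$. Let $T$ be an absolutely continuous random variable with CDF $F_T$ and the same support as $X$, and let $q_1(u)=q_2(u)=u$, $0\le u\le1$. Then $$\hat G_X(\mathbf q,F_T)=\frac12\,\mathbb{E}\left[F_T(\max\{X,X'\})-F_T(\min\{X,X'\})\right].$$
   Context: The weighted $\mathbf q$-distorted Gini function of $X$ (CDF $F$, survival $\overline F=1-F$), for distortion functions $q_1,q_2$ (increasing maps $[0,1]\to[0,1]$ fixing $0$ and $1$), is $\hat G_X(\mathbf q,F_T)=\int_\Delta q_1(F(x))\,q_2(\overline F(x))\,dF_T(x)$, where $\Delta$ is the non-empty intersection of the supports of $X$ and $T$. *)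

theory Defs
  imports "HOL-Probability.Probability"
begin

definition msupport :: "real measure \<Rightarrow> real set" where
  "msupport M = {x. \<forall>e>0. 0 < measure M (ball x e)}"

definition qgini :: "(real \<Rightarrow> real) \<Rightarrow> (real \<Rightarrow> real) \<Rightarrow> real measure \<Rightarrow> real measure \<Rightarrow> real" where
  "qgini q1 q2 MX MT =
     (LINT x : (msupport MX \<inter> msupport MT) | MT. q1 (cdf MX x) * q2 (1 - cdf MX x))"

end

theory Submission
  imports Defs
begin

lemma msupport_AE:
  assumes "real_distribution M"
  shows "AE x in M. x \<in> msupport M"
proof -
  interpret M: real_distribution M by fact
  define I where "I = {(a::rat,b::rat). measure M {real_of_rat a<..<real_of_rat b} = 0}"
  define N where "N = (\<Union>(a,b)\<in>I. {real_of_rat a<..<real_of_rat b})"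
  have "countable I" by (rule countable_subset[of _ UNIV]) auto
  have "N \<in> null_sets M"
    unfolding N_def
  proof (rule null_sets_UN')
    show "countable I" by fact
    fix i assume "i \<in> I"
    then show "(case i of (a, b) \<Rightarrow> {real_of_rat a<..<real_of_rat b}) \<in> null_sets M"
      by (cases i) (auto simp: I_def M.emeasure_eq_measure)
  qed
  moreover have "{x \<in> space M. \<not> x \<in> msupport M} \<subseteq> N"
  proof safe
    fix x assume "x \<notin> msupport M"
    then obtain e where e: "e > 0" "\<not> 0 < measure M (ball x e)"
      by (auto simp: msupport_def)
    then have e0: "measure M (ball x e) = 0" using measure_nonneg[of M] by (meson not_le antisym)
    obtain a where a: "a \<in> \<rat>" "x - e < a" "a < x" using Rats_dense_in_real[of "x - e" x] e by auto
    obtain b where b: "b \<in> \<rat>" "x < b" "b < x + e" using Rats_dense_in_real[of x "x + e"] e by auto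
    obtain a' where a': "a = real_of_rat a'" using a(1) Rats_cases by blast
    obtain b' where b': "b = real_of_rat b'" using b(1) Rats_cases by blast
    have sub: "{a<..<b} \<subseteq> ball x e" using a b by (auto simp: ball_def dist_real_def)
    have "measure M {a<..<b} \<le> measure M (ball x e)"
      by (rule M.finite_measure_mono[OF sub]) auto
    then have "measure M {a<..<b} = 0" using e0 measure_nonneg[of M "{a<..<b}"] by linarith
    then have "(a',b') \<in> I" using a' b' by (simp add: I_def)
    then show "x \<in> N" unfolding N_def using a b a' b' by force
  qed
  ultimately show ?thesis by (rule AE_I')
qed


lemma split_Iic: assumes "(a::real) \<le> b" shows "{..b} = ({..<a} \<union> {a..<b}) \<union> {b}"
  using assms by (auto simp: not_less)

lemma msupport_closed:
  assumes "real_distribution M"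
  shows "closed (msupport M)"
proof -
  interpret M: real_distribution M by fact
  have "open (- msupport M)"
    unfolding open_contains_ball
  proof safe
    fix x assume "x \<notin> msupport M"
    then obtain e where e: "e > 0" "\<not> 0 < measure M (ball x e)"
      by (auto simp: msupport_def)
    then have e0: "measure M (ball x e) = 0" using measure_nonneg[of M "ball x e"] by linarith
    show "\<exists>d>0. ball x d \<subseteq> - msupport M"
    proof (intro exI conjI)
      show "e/2 > 0" using e by simp
      show "ball x (e/2) \<subseteq> - msupport M"
      proof
        fix y assume y: "y \<in> ball x (e/2)"
        have sub: "ball y (e/2) \<subseteq> ball x e" using y
          by (auto simp: ball_def dist_real_def) (simp add: abs_if split: if_splits)
        have "measure M (ball y (e/2)) \<le> measure M (ball x e)"
          by (rule M.finite_measure_mono[OF sub]) auto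
        then have nz: "\<not> 0 < measure M (ball y (e/2))" using e0 by linarith
        have "e/2 > 0" using e by simp
        then show "y \<in> - msupport M" using nz unfolding msupport_def by blast
      qed
    qed
  qed
  then show ?thesis by (simp add: closed_def)
qed

lemma measure_times_pair:
  assumes "prob_space M" "prob_space N" "A \<in> sets M" "B \<in> sets N"
  shows "measure (M \<Otimes>\<^sub>M N) (A \<times> B) = measure M A * measure N B"
proof -
  interpret N: prob_space N by fact
  show ?thesis using assms(3,4)
    by (simp add: measure_def N.emeasure_pair_measure_Times enn2real_mult)
qed

lemma cdf_diff_ac:
  assumes "real_distribution M" "absolutely_continuous lborel M" "a \<le> b"
  shows "cdf M b - cdf M a = measure M {a..<b}"
proof -
  interpret M: real_distribution M by fact
  have pt: "measure M {c} = 0" for c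
  proof -
    have "{c} \<in> null_sets lborel" by (intro countable_imp_null_set_lborel) simp
    then have "{c} \<in> null_sets M" using assms(2) by (auto simp: absolutely_continuous_def)
    then show ?thesis by (simp add: measure_def null_setsD1)
  qed
  have 1: "measure M {..b} = measure M ({..<a} \<union> {a..<b}) + measure M {b}"
  proof -
    have e: "{..b} = ({..<a} \<union> {a..<b}) \<union> {b}" by (rule split_Iic[OF assms(3)])
    have "measure M (({..<a} \<union> {a..<b}) \<union> {b}) = measure M ({..<a} \<union> {a..<b}) + measure M {b}"
      by (rule M.finite_measure_Union) (use assms(3) in auto)
    then show ?thesis by (subst e)
  qed
  have 2: "measure M ({..<a} \<union> {a..<b}) = measure M {..<a} + measure M {a..<b}"
    by (rule M.finite_measure_Union) auto
  have 3: "measure M {..a} = measure M {..<a} + measure M {a}"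
  proof -
    have e: "{..a} = {..<a} \<union> {a}" by auto
    have "measure M ({..<a} \<union> {a}) = measure M {..<a} + measure M {a}"
      by (rule M.finite_measure_Union) auto
    then show ?thesis by (subst e)
  qed
  show ?thesis unfolding cdf_def using 1 2 3 pt by simp
qed

theorem proposition12:
  fixes MX MT :: "real measure" and q1 q2 :: "real \<Rightarrow> real"
  assumes X_distr: "real_distribution MX"
    and X_nondeg: "\<forall>c. measure MX {c} < 1"
    and min_fin: "integrable (MX \<Otimes>\<^sub>M MX) (\<lambda>(x, x'). min x x')"
    and max_fin: "integrable (MX \<Otimes>\<^sub>M MX) (\<lambda>(x, x'). max x x')"
    and T_distr: "real_distribution MT"
    and T_ac: "absolutely_continuous lborel MT"
    and same_supp: "msupport MT = msupport MX"
    and q1_id: "\<forall>u\<in>{0..1}. q1 u = u"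
    and q2_id: "\<forall>u\<in>{0..1}. q2 u = u"
  shows "qgini q1 q2 MX MT =
           1/2 * (\<integral>(x, x'). cdf MT (max x x') - cdf MT (min x x') \<partial>(MX \<Otimes>\<^sub>M MX))"
proof -
  interpret X: real_distribution MX by fact
  interpret T: real_distribution MT by fact
  interpret XX: pair_prob_space MX MX ..
  interpret XXT: pair_prob_space "MX \<Otimes>\<^sub>M MX" MT ..
  define F where "F = cdf MX"
  have F01: "0 \<le> F x \<and> F x \<le> 1" for x
    unfolding F_def using X.cdf_nonneg X.cdf_bounded_prob by auto
  define g where "g = (\<lambda>(p::real\<times>real) (t::real). indicator {min (fst p) (snd p)..<max (fst p) (snd p)} t :: real)"
  have sX[measurable_cong]: "sets (MX \<Otimes>\<^sub>M MX) = sets (borel \<Otimes>\<^sub>M borel)"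
    by (intro sets_pair_measure_cong) auto
  have gmeas: "case_prod g \<in> borel_measurable ((MX \<Otimes>\<^sub>M MX) \<Otimes>\<^sub>M MT)"
  proof -
    have "case_prod g = (\<lambda>z. of_bool (min (fst (fst z)) (snd (fst z)) \<le> snd z \<and> snd z < max (fst (fst z)) (snd (fst z))) :: real)"
      by (auto simp: g_def fun_eq_iff indicator_def)
    moreover have "sets ((MX \<Otimes>\<^sub>M MX) \<Otimes>\<^sub>M MT) = sets ((borel \<Otimes>\<^sub>M borel) \<Otimes>\<^sub>M borel)"
      by (intro sets_pair_measure_cong) auto
    moreover have "(\<lambda>z::(real\<times>real)\<times>real. of_bool (min (fst (fst z)) (snd (fst z)) \<le> snd z \<and> snd z < max (fst (fst z)) (snd (fst z))) :: real) \<in> borel_measurable ((borel \<Otimes>\<^sub>M borel) \<Otimes>\<^sub>M borel)"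
      by measurable
    ultimately show ?thesis using measurable_cong_sets[OF _ refl] by metis
  qed
  have gint: "integrable ((MX \<Otimes>\<^sub>M MX) \<Otimes>\<^sub>M MT) (case_prod g)"
    by (rule XXT.P.integrable_const_bound[where B=1, OF _ gmeas]) (auto simp: g_def)
  have inner1: "(\<integral>t. g p t \<partial>MT) = cdf MT (max (fst p) (snd p)) - cdf MT (min (fst p) (snd p))" for p
    using cdf_diff_ac[OF T_distr T_ac, of "min (fst p) (snd p)" "max (fst p) (snd p)"]
    by (simp add: g_def)
  have inner2: "(\<integral>p. g p t \<partial>(MX \<Otimes>\<^sub>M MX)) = 2 * (F t * (1 - F t))" for t
  proof -
    define A where "A = {..t} \<times> {t<..}"
    define B where "B = {t<..} \<times> {..t}"
    have "(\<lambda>p. g p t) = indicator (A \<union> B)"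
      by (auto simp: g_def A_def B_def fun_eq_iff indicator_def min_def max_def)
    then have "(\<integral>p. g p t \<partial>(MX \<Otimes>\<^sub>M MX)) = measure (MX \<Otimes>\<^sub>M MX) (A \<union> B)"
      by (simp add: space_pair_measure)
    also have "\<dots> = measure (MX \<Otimes>\<^sub>M MX) A + measure (MX \<Otimes>\<^sub>M MX) B"
      by (rule XX.finite_measure_Union) (auto simp: A_def B_def)
    also have "measure (MX \<Otimes>\<^sub>M MX) A = F t * (1 - F t)"
    proof -
      have "measure MX {t<..} = 1 - F t"
        using X.prob_compl[of "{..t}"] by (simp add: F_def cdf_def Compl_eq_Diff_UNIV[symmetric] Compl_atMost)
      then show ?thesis unfolding A_def
        by (simp add: measure_times_pair[OF X.prob_space_axioms X.prob_space_axioms] F_def cdf_def)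
    qed
    also have "measure (MX \<Otimes>\<^sub>M MX) B = F t * (1 - F t)"
    proof -
      have "measure MX {t<..} = 1 - F t"
        using X.prob_compl[of "{..t}"] by (simp add: F_def cdf_def Compl_eq_Diff_UNIV[symmetric] Compl_atMost)
      then show ?thesis unfolding B_def
        by (simp add: measure_times_pair[OF X.prob_space_axioms X.prob_space_axioms] F_def cdf_def)
    qed
    finally show ?thesis by simp
  qed
  have "(\<integral>(x, x'). cdf MT (max x x') - cdf MT (min x x') \<partial>(MX \<Otimes>\<^sub>M MX))
      = (\<integral>p. (\<integral>t. g p t \<partial>MT) \<partial>(MX \<Otimes>\<^sub>M MX))"
    by (simp add: inner1 split_beta')
  also have "\<dots> = (\<integral>t. (\<integral>p. g p t \<partial>(MX \<Otimes>\<^sub>M MX)) \<partial>MT)"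
    by (rule XXT.Fubini_integral[symmetric, OF gint])
  also have "\<dots> = (\<integral>t. 2 * (F t * (1 - F t)) \<partial>MT)"
    by (simp add: inner2)
  finally have R: "(\<integral>(x, x'). cdf MT (max x x') - cdf MT (min x x') \<partial>(MX \<Otimes>\<^sub>M MX))
      = 2 * (\<integral>t. F t * (1 - F t) \<partial>MT)" by simp
  have Fmeas[measurable]: "F \<in> borel_measurable borel"
    unfolding F_def by (rule borel_measurable_mono) (auto simp: mono_def X.cdf_nondecreasing)
  have Smeas[measurable]: "msupport MX \<inter> msupport MT \<in> sets borel"
    using msupport_closed[OF X_distr] msupport_closed[OF T_distr] by auto
  have L1: "qgini q1 q2 MX MT = (\<integral>t. indicator (msupport MX \<inter> msupport MT) t * (F t * (1 - F t)) \<partial>MT)"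
    unfolding qgini_def set_lebesgue_integral_def
  proof (rule Bochner_Integration.integral_cong[OF refl])
    fix x
    have "q1 (cdf MX x) = F x" "q2 (1 - cdf MX x) = 1 - F x"
      using F01[of x] q1_id q2_id by (auto simp: F_def)
    then show "indicator (msupport MX \<inter> msupport MT) x *\<^sub>R (q1 (cdf MX x) * q2 (1 - cdf MX x))
        = indicator (msupport MX \<inter> msupport MT) x * (F x * (1 - F x))" by simp
  qed
  have L: "qgini q1 q2 MX MT = (\<integral>t. F t * (1 - F t) \<partial>MT)"
    unfolding L1
  proof (rule integral_cong_AE)
    show "AE x in MT. indicator (msupport MX \<inter> msupport MT) x * (F x * (1 - F x))
        = F x * (1 - F x)"
      using msupport_AE[OF T_distr]
    proof eventually_elim
      case (elim x)
      then show ?case using same_supp by simp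
    qed
  qed measurable
  show ?thesis using L R by simp
qed

end
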